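(* If $\Delta;\Gamma\vdash M:A$, $\Delta;\Gamma\vdash N:A$ and $\Delta\vdash M\equiv N$ in DCC, then $\vdash M^\circ\equiv N^\circ$ in CC.
   Context: DCC: expressions $x\mid U_i\mid\Pi x{:}A.B\mid L@M\mid\ell_i\{\overline M\}$; label contexts $\Delta::=\cdot\mid\Delta,\ell_i(\{\overline x{:}\overline A\},x{:}A\mapsto L:B)$; substitution with $\ell\{\overline M\}[N/x]=\ell\{\overline{M[N/x]}\}$; reduction $\Delta\vdash\ell\{\overline M\}@N\triangleright L[\overline M/\overline x,N/x]$ when $\ell(\{\overline x{:}\overline A\},x{:}A\mapsto L:B)\in\Delta$; equivalence $\Delta\vdash M\equiv N$: common reduct, or $\Delta\vdash L\triangleright^*\ell\{\overline N\}$, $\Delta\vdash M\triangleright^*M'$, $\ell(\{\overline x{:}\overline A\},x{:}A\mapsto N:B)\in\Delta$, $\Delta\vdash N[\overline N/\overline x]\equiv M'@x$ give $\Delta\vdash L\equiv M$, and symmetrically; typing $\Delta;\Gamma\vdash M:A$ by CC-style rules for variables, $U_i:U_{i+1}$, $\Pi$, application $M@N:B[N/x]$, conversion, plus: if $\Delta;\Gamma$ well formed, $\ell(\{\overline x{:}\overline A\},x{:}A\mapsto M:B)\in\Delta$, $|\overline M|=|\overline x|$, $\Delta;\Gamma\vdash M_k:A_k[M_1/x_1,\dots,M_{k-1}/x_{k-1}]$ for all $k$, then $\Delta;\Gamma\vdash\ell\{\overline M\}:\Pi x{:}A[\overline M/\overline x].B[\overline M/\overline x]$. CC: expressions $x\mid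 U_i\mid\Pi x{:}A.B\mid L\,M\mid\lambda x{:}A.M$; reduction $(\lambda x{:}A.N)\,M\triangleright N[M/x]$; $\vdash M\equiv N$: common reduct, or $L\triangleright^*\lambda x{:}A.L'$, $M\triangleright^*M'$, $\vdash L'\equiv M'\,x$ give $\vdash L\equiv M$, and symmetrically. Backward transformation (relative to $\Delta$, on well-typed terms): $x^\circ=x$, $U_i^\circ=U_i$, $(\Pi x{:}A.B)^\circ=\Pi x{:}A^\circ.B^\circ$, $(M@N)^\circ=M^\circ\,N^\circ$, $(\ell\{\overline M\})^\circ=\lambda x{:}A^\circ[\overline{M^\circ}/\overline x].\,L^\circ[\overline{M^\circ}/\overline x]$ where $\ell(\{\overline x{:}\overline A\},x{:}A\mapsto L:B)\in\Delta$. *)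

theory Defs
  imports Main
begin

text \<open>A label entry is (l, (As, A, L, B)) representing
  l({x_1:A_1,...,x_n:A_n}, x:A |-> L : B), where A_k lives in the context
  x_1..x_(k-1), A in x_1..x_n, and L, B in x_1..x_n, x (x = index 0).
  A label context is a list whose head is the most recently added entry.\<close>

datatype dterm = DVar nat | DU nat | DPi dterm dterm | DApp dterm dterm
  | DLab nat "dterm list"

type_synonym ldef = "dterm list \<times> dterm \<times> dterm \<times> dterm"
type_synonym lctx = "(nat \<times> ldef) list"

definition upr :: "(nat \<Rightarrow> nat) \<Rightarrow> nat \<Rightarrow> nat" where
  "upr r k = (case k of 0 \<Rightarrow> 0 | Suc j \<Rightarrow> Suc (r j))"

fun dren :: "(nat \<Rightarrow> nat) \<Rightarrow> dterm \<Rightarrow> dterm" where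
  "dren r (DVar i) = DVar (r i)"
| "dren r (DU i) = DU i"
| "dren r (DPi A B) = DPi (dren r A) (dren (upr r) B)"
| "dren r (DApp M N) = DApp (dren r M) (dren r N)"
| "dren r (DLab l Ms) = DLab l (map (dren r) Ms)"

definition dlift :: "dterm \<Rightarrow> dterm" where "dlift = dren Suc"

definition dup :: "(nat \<Rightarrow> dterm) \<Rightarrow> nat \<Rightarrow> dterm" where
  "dup \<sigma> k = (case k of 0 \<Rightarrow> DVar 0 | Suc j \<Rightarrow> dlift (\<sigma> j))"

fun dsubst :: "(nat \<Rightarrow> dterm) \<Rightarrow> dterm \<Rightarrow> dterm" where
  "dsubst \<sigma> (DVar i) = \<sigma> i"
| "dsubst \<sigma> (DU i) = DU i"
| "dsubst \<sigma> (DPi A B) = DPi (dsubst \<sigma> A) (dsubst (dup \<sigma>) B)"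
| "dsubst \<sigma> (DApp M N) = DApp (dsubst \<sigma> M) (dsubst \<sigma> N)"
| "dsubst \<sigma> (DLab l Ms) = DLab l (map (dsubst \<sigma>) Ms)"

text \<open>dinst [M_1,...,M_n] substitutes M_1..M_n for x_1..x_n (x_n = index 0)
  and shifts the remaining indices down by n.\<close>
definition dinst :: "dterm list \<Rightarrow> nat \<Rightarrow> dterm" where
  "dinst Ms k = (if k < length Ms then Ms ! (length Ms - Suc k) else DVar (k - length Ms))"

definition dsubst1 :: "dterm \<Rightarrow> dterm \<Rightarrow> dterm" where
  "dsubst1 N M = dsubst (dinst [N]) M"   \<comment> \<open>M[N/x], x = index 0\<close>

inductive dstep :: "lctx \<Rightarrow> dterm \<Rightarrow> dterm \<Rightarrow> bool" for \<Delta> where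
  lab_beta: "(l, (As, A, L, B)) \<in> set \<Delta> \<Longrightarrow> length Ms = length As \<Longrightarrow>
     dstep \<Delta> (DApp (DLab l Ms) N) (dsubst (dinst (Ms @ [N])) L)"
| pi1: "dstep \<Delta> A A' \<Longrightarrow> dstep \<Delta> (DPi A B) (DPi A' B)"
| pi2: "dstep \<Delta> B B' \<Longrightarrow> dstep \<Delta> (DPi A B) (DPi A B')"
| app1: "dstep \<Delta> M M' \<Longrightarrow> dstep \<Delta> (DApp M N) (DApp M' N)"
| app2: "dstep \<Delta> N N' \<Longrightarrow> dstep \<Delta> (DApp M N) (DApp M N')"
| lab: "dstep \<Delta> M M' \<Longrightarrow> dstep \<Delta> (DLab l (xs @ M # ys)) (DLab l (xs @ M' # ys))"

definition dsteps :: "lctx \<Rightarrow> dterm \<Rightarrow> dterm \<Rightarrow> bool" where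
  "dsteps \<Delta> = (dstep \<Delta>)\<^sup>*\<^sup>*"

inductive dequiv :: "lctx \<Rightarrow> dterm \<Rightarrow> dterm \<Rightarrow> bool" for \<Delta> where
  common: "dsteps \<Delta> M L \<Longrightarrow> dsteps \<Delta> N L \<Longrightarrow> dequiv \<Delta> M N"
| eta1: "dsteps \<Delta> L (DLab l Ns) \<Longrightarrow> dsteps \<Delta> M M' \<Longrightarrow>
     (l, (As, A, N, B)) \<in> set \<Delta> \<Longrightarrow> length Ns = length As \<Longrightarrow>
     dequiv \<Delta> (dsubst (dup (dinst Ns)) N) (DApp (dlift M') (DVar 0)) \<Longrightarrow>
     dequiv \<Delta> L M"
| eta2: "dsteps \<Delta> L (DLab l Ns) \<Longrightarrow> dsteps \<Delta> M M' \<Longrightarrow>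
     (l, (As, A, N, B)) \<in> set \<Delta> \<Longrightarrow> length Ns = length As \<Longrightarrow>
     dequiv \<Delta> (DApp (dlift M') (DVar 0)) (dsubst (dup (dinst Ns)) N) \<Longrightarrow>
     dequiv \<Delta> M L"

text \<open>Typing contexts: head = innermost variable (index 0).
  The context of a label body x_1:A_1,...,x_n:A_n, x:A is  A # rev As.\<close>

inductive wfL :: "lctx \<Rightarrow> bool"
  and wfC :: "lctx \<Rightarrow> dterm list \<Rightarrow> bool"
  and dtyp :: "lctx \<Rightarrow> dterm list \<Rightarrow> dterm \<Rightarrow> dterm \<Rightarrow> bool"
where
  wfL_nil: "wfL []"
| wfL_cons: "wfL \<Delta> \<Longrightarrow> l \<notin> fst ` set \<Delta> \<Longrightarrow> dtyp \<Delta> (A # rev As) L B \<Longrightarrow>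
     wfL ((l, (As, A, L, B)) # \<Delta>)"
| wfC_nil: "wfL \<Delta> \<Longrightarrow> wfC \<Delta> []"
| wfC_cons: "dtyp \<Delta> \<Gamma> A (DU i) \<Longrightarrow> wfC \<Delta> (A # \<Gamma>)"
| t_var: "wfC \<Delta> \<Gamma> \<Longrightarrow> i < length \<Gamma> \<Longrightarrow> dtyp \<Delta> \<Gamma> (DVar i) ((dlift ^^ Suc i) (\<Gamma> ! i))"
| t_univ: "wfC \<Delta> \<Gamma> \<Longrightarrow> dtyp \<Delta> \<Gamma> (DU i) (DU (Suc i))"
| t_pi: "dtyp \<Delta> \<Gamma> A (DU i) \<Longrightarrow> dtyp \<Delta> (A # \<Gamma>) B (DU i) \<Longrightarrow> dtyp \<Delta> \<Gamma> (DPi A B) (DU i)"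
| t_app: "dtyp \<Delta> \<Gamma> M (DPi A B) \<Longrightarrow> dtyp \<Delta> \<Gamma> N A \<Longrightarrow> dtyp \<Delta> \<Gamma> (DApp M N) (dsubst1 N B)"
| t_conv: "dtyp \<Delta> \<Gamma> M A \<Longrightarrow> dtyp \<Delta> \<Gamma> B (DU i) \<Longrightarrow> dequiv \<Delta> A B \<Longrightarrow> dtyp \<Delta> \<Gamma> M B"
| t_lab: "wfC \<Delta> \<Gamma> \<Longrightarrow> (l, (As, A, L, B)) \<in> set \<Delta> \<Longrightarrow> length Ms = length As \<Longrightarrow>
     (\<forall>k < length Ms. dtyp \<Delta> \<Gamma> (Ms ! k) (dsubst (dinst (take k Ms)) (As ! k))) \<Longrightarrow>
     dtyp \<Delta> \<Gamma> (DLab l Ms) (DPi (dsubst (dinst Ms) A) (dsubst (dup (dinst Ms)) B))"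

datatype cterm = CVar nat | CU nat | CPi cterm cterm | CApp cterm cterm | CLam cterm cterm

fun cren :: "(nat \<Rightarrow> nat) \<Rightarrow> cterm \<Rightarrow> cterm" where
  "cren r (CVar i) = CVar (r i)"
| "cren r (CU i) = CU i"
| "cren r (CPi A B) = CPi (cren r A) (cren (upr r) B)"
| "cren r (CApp M N) = CApp (cren r M) (cren r N)"
| "cren r (CLam A M) = CLam (cren r A) (cren (upr r) M)"

definition clift :: "cterm \<Rightarrow> cterm" where "clift = cren Suc"

definition cup :: "(nat \<Rightarrow> cterm) \<Rightarrow> nat \<Rightarrow> cterm" where
  "cup \<sigma> k = (case k of 0 \<Rightarrow> CVar 0 | Suc j \<Rightarrow> clift (\<sigma> j))"

fun csubst :: "(nat \<Rightarrow> cterm) \<Rightarrow> cterm \<Rightarrow> cterm" where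
  "csubst \<sigma> (CVar i) = \<sigma> i"
| "csubst \<sigma> (CU i) = CU i"
| "csubst \<sigma> (CPi A B) = CPi (csubst \<sigma> A) (csubst (cup \<sigma>) B)"
| "csubst \<sigma> (CApp M N) = CApp (csubst \<sigma> M) (csubst \<sigma> N)"
| "csubst \<sigma> (CLam A M) = CLam (csubst \<sigma> A) (csubst (cup \<sigma>) M)"

definition cinst :: "cterm list \<Rightarrow> nat \<Rightarrow> cterm" where
  "cinst Ms k = (if k < length Ms then Ms ! (length Ms - Suc k) else CVar (k - length Ms))"

inductive cstep :: "cterm \<Rightarrow> cterm \<Rightarrow> bool" where
  beta: "cstep (CApp (CLam A N) M) (csubst (cinst [M]) N)"
| pi1: "cstep A A' \<Longrightarrow> cstep (CPi A B) (CPi A' B)"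
| pi2: "cstep B B' \<Longrightarrow> cstep (CPi A B) (CPi A B')"
| app1: "cstep M M' \<Longrightarrow> cstep (CApp M N) (CApp M' N)"
| app2: "cstep N N' \<Longrightarrow> cstep (CApp M N) (CApp M N')"
| lam1: "cstep A A' \<Longrightarrow> cstep (CLam A M) (CLam A' M)"
| lam2: "cstep M M' \<Longrightarrow> cstep (CLam A M) (CLam A M')"

definition csteps :: "cterm \<Rightarrow> cterm \<Rightarrow> bool" where
  "csteps = cstep\<^sup>*\<^sup>*"

inductive cequiv :: "cterm \<Rightarrow> cterm \<Rightarrow> bool" where
  common: "csteps M L \<Longrightarrow> csteps N L \<Longrightarrow> cequiv M N"
| eta1: "csteps L (CLam A L') \<Longrightarrow> csteps M M' \<Longrightarrow>
     cequiv L' (CApp (clift M') (CVar 0)) \<Longrightarrow> cequiv L M"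
| eta2: "csteps L (CLam A L') \<Longrightarrow> csteps M M' \<Longrightarrow>
     cequiv (CApp (clift M') (CVar 0)) L' \<Longrightarrow> cequiv M L"

text \<open>Looking up a label returns its definition and the label context preceding it
  (under which, in a well-formed label context, its body is typed).\<close>
fun lookup_lab :: "nat \<Rightarrow> lctx \<Rightarrow> (ldef \<times> lctx) option" where
  "lookup_lab l [] = None"
| "lookup_lab l ((l', d) # \<Delta>) = (if l = l' then Some (d, \<Delta>) else lookup_lab l \<Delta>)"

lemma lookup_lab_shorter: "lookup_lab l \<Delta> = Some (d, \<Delta>') \<Longrightarrow> length \<Delta>' < length \<Delta>"
  by (induction l \<Delta> rule: lookup_lab.induct) (auto split: if_splits)

function bwd :: "lctx \<Rightarrow> dterm \<Rightarrow> cterm" where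
  "bwd \<Delta> (DVar i) = CVar i"
| "bwd \<Delta> (DU i) = CU i"
| "bwd \<Delta> (DPi A B) = CPi (bwd \<Delta> A) (bwd \<Delta> B)"
| "bwd \<Delta> (DApp M N) = CApp (bwd \<Delta> M) (bwd \<Delta> N)"
| "bwd \<Delta> (DLab l Ms) =
    (case lookup_lab l \<Delta> of
       None \<Rightarrow> CVar 0
     | Some ((As, A, L, B), \<Delta>') \<Rightarrow>
         CLam (csubst (cinst (map (bwd \<Delta>) Ms)) (bwd \<Delta>' A))
              (csubst (cup (cinst (map (bwd \<Delta>) Ms))) (bwd \<Delta>' L)))"
  by pat_completeness auto
termination
  apply (relation "measures [\<lambda>(\<Delta>, M). length \<Delta>, \<lambda>(\<Delta>, M). size M]")
  apply (auto dest: lookup_lab_shorter)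
  apply (meson le_imp_less_Suc size_list_estimation' order_refl)+
  done

end

theory Submission
  imports Defs
begin

fun dcl :: "nat \<Rightarrow> dterm \<Rightarrow> bool" where
  "dcl n (DVar i) = (i < n)"
| "dcl n (DU i) = True"
| "dcl n (DPi A B) = (dcl n A \<and> dcl (Suc n) B)"
| "dcl n (DApp M N) = (dcl n M \<and> dcl n N)"
| "dcl n (DLab l Ms) = (\<forall>M\<in>set Ms. dcl n M)"

fun ccl :: "nat \<Rightarrow> cterm \<Rightarrow> bool" where
  "ccl n (CVar i) = (i < n)"
| "ccl n (CU i) = True"
| "ccl n (CPi A B) = (ccl n A \<and> ccl (Suc n) B)"
| "ccl n (CApp M N) = (ccl n M \<and> ccl n N)"
| "ccl n (CLam A M) = (ccl n A \<and> ccl (Suc n) M)"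

fun lok :: "lctx \<Rightarrow> dterm \<Rightarrow> bool" where
  "lok D (DVar i) = True"
| "lok D (DU i) = True"
| "lok D (DPi A B) = (lok D A \<and> lok D B)"
| "lok D (DApp M N) = (lok D M \<and> lok D N)"
| "lok D (DLab l Ms) = ((\<exists>d D'. lookup_lab l D = Some (d, D') \<and> length Ms = length (fst d))
      \<and> (\<forall>M\<in>set Ms. lok D M))"

lemma upr0[simp]: "upr r 0 = 0" and uprS[simp]: "upr r (Suc j) = Suc (r j)"
  by (simp_all add: upr_def)

lemma cup0[simp]: "cup s 0 = CVar 0" and cupS[simp]: "cup s (Suc j) = clift (s j)"
  by (simp_all add: cup_def)

lemma dup0[simp]: "dup s 0 = DVar 0" and dupS[simp]: "dup s (Suc j) = dlift (s j)"
  by (simp_all add: dup_def)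

lemma cren_cren: "cren r (cren s t) = cren (\<lambda>i. r (s i)) t"
proof (induction t arbitrary: r s)
  case (CPi A B) then show ?case
    by simp (metis (no_types, lifting) ext upr_def nat.case_eq_if uprS upr0)
next
  case (CLam A B) then show ?case
    by simp (metis (no_types, lifting) ext upr_def nat.case_eq_if uprS upr0)
qed auto

lemma cup_ren: "cup (\<lambda>i. CVar (r i)) = (\<lambda>i. CVar (upr r i))"
  by (rule ext, case_tac i) (auto simp: clift_def)

lemma cren_csubst: "cren r t = csubst (\<lambda>i. CVar (r i)) t"
  by (induction t arbitrary: r) (auto simp: cup_ren)

lemma csubst_ren: "csubst s (cren r t) = csubst (\<lambda>i. s (r i)) t"
proof (induction t arbitrary: r s)
  case (CPi A B)
  have "(\<lambda>i. cup s (upr r i)) = cup (\<lambda>i. s (r i))" by (rule ext, case_tac i) auto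
  with CPi show ?case by simp
next
  case (CLam A B)
  have "(\<lambda>i. cup s (upr r i)) = cup (\<lambda>i. s (r i))" by (rule ext, case_tac i) auto
  with CLam show ?case by simp
qed auto

lemma ren_csubst: "cren r (csubst s t) = csubst (\<lambda>i. cren r (s i)) t"
proof (induction t arbitrary: r s)
  case (CPi A B)
  have "(\<lambda>i. cren (upr r) (cup s i)) = cup (\<lambda>i. cren r (s i))"
    by (rule ext, case_tac i) (auto simp: clift_def cren_cren)
  with CPi show ?case by simp
next
  case (CLam A B)
  have "(\<lambda>i. cren (upr r) (cup s i)) = cup (\<lambda>i. cren r (s i))"
    by (rule ext, case_tac i) (auto simp: clift_def cren_cren)
  with CLam show ?case by simp
qed auto

lemma csubst_csubst: "csubst s (csubst r t) = csubst (\<lambda>i. csubst s (r i)) t"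
proof (induction t arbitrary: r s)
  case (CPi A B)
  have "(\<lambda>i. csubst (cup s) (cup r i)) = cup (\<lambda>i. csubst s (r i))"
    by (rule ext, case_tac i) (auto simp: clift_def csubst_ren ren_csubst)
  with CPi show ?case by simp
next
  case (CLam A B)
  have "(\<lambda>i. csubst (cup s) (cup r i)) = cup (\<lambda>i. csubst s (r i))"
    by (rule ext, case_tac i) (auto simp: clift_def csubst_ren ren_csubst)
  with CLam show ?case by simp
qed auto

lemma cup_id: "cup CVar = CVar"
  by (rule ext, case_tac x) (auto simp: clift_def)

lemma csubst_id[simp]: "csubst CVar t = t"
  by (induction t) (auto simp: cup_id)

lemma csubst_lift: "csubst (cup s) (clift t) = clift (csubst s t)"
  by (simp add: clift_def csubst_ren ren_csubst)

lemma ccl_ren: "ccl n t \<Longrightarrow> (\<forall>i<n. r i < m) \<Longrightarrow> ccl m (cren r t)"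
proof (induction t arbitrary: n m r)
  case (CPi A B)
  have "\<forall>i<Suc n. upr r i < Suc m" using CPi.prems by (auto simp: less_Suc_eq_0_disj)
  with CPi show ?case by auto
next
  case (CLam A B)
  have "\<forall>i<Suc n. upr r i < Suc m" using CLam.prems by (auto simp: less_Suc_eq_0_disj)
  with CLam show ?case by auto
qed auto

lemma ccl_subst: "ccl n t \<Longrightarrow> (\<forall>i<n. ccl m (s i)) \<Longrightarrow> ccl m (csubst s t)"
proof (induction t arbitrary: n m s)
  case (CPi A B)
  have "\<forall>i<Suc n. ccl (Suc m) (cup s i)"
    using CPi.prems by (auto simp: less_Suc_eq_0_disj clift_def intro!: ccl_ren)
  with CPi show ?case by auto
next
  case (CLam A B)
  have "\<forall>i<Suc n. ccl (Suc m) (cup s i)"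
    using CLam.prems by (auto simp: less_Suc_eq_0_disj clift_def intro!: ccl_ren)
  with CLam show ?case by auto
qed auto

lemma csubst_cong: "ccl n t \<Longrightarrow> (\<forall>i<n. s i = s' i) \<Longrightarrow> csubst s t = csubst s' t"
proof (induction t arbitrary: n s s')
  case (CPi A B)
  have "\<forall>i<Suc n. cup s i = cup s' i"
    using CPi.prems by (auto simp: less_Suc_eq_0_disj)
  with CPi show ?case by auto
next
  case (CLam A B)
  have "\<forall>i<Suc n. cup s i = cup s' i"
    using CLam.prems by (auto simp: less_Suc_eq_0_disj)
  with CLam show ?case by auto
qed auto

lemma cinst_map: "i < length xs \<Longrightarrow> cinst (map f xs) i = f (cinst xs i)"
  by (simp add: cinst_def)

lemma clam_commute:
  assumes "ccl (length xs) A" "ccl (Suc (length xs)) L"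
  shows "csubst s (CLam (csubst (cinst xs) A) (csubst (cup (cinst xs)) L)) =
     CLam (csubst (cinst (map (csubst s) xs)) A) (csubst (cup (cinst (map (csubst s) xs))) L)"
proof -
  have 1: "csubst (\<lambda>i. csubst s (cinst xs i)) A = csubst (cinst (map (csubst s) xs)) A"
    by (rule csubst_cong[OF assms(1)]) (simp add: cinst_map)
  have 2: "csubst (\<lambda>i. csubst (cup s) (cup (cinst xs) i)) L = csubst (cup (cinst (map (csubst s) xs))) L"
    by (rule csubst_cong[OF assms(2)]) (auto simp: less_Suc_eq_0_disj cinst_map csubst_lift)
  show ?thesis using 1 2 by (simp add: csubst_csubst)
qed


definition goodL :: "lctx \<Rightarrow> bool" where
  "goodL D \<longleftrightarrow> distinct (map fst D) \<and>
    (\<forall>l As A L B D'. lookup_lab l D = Some ((As, A, L, B), D') \<longrightarrow>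
       lok D L \<and> bwd D' L = bwd D L \<and> ccl (length As) (bwd D' A) \<and> ccl (Suc (length As)) (bwd D' L))"

lemma bwd_lab: "lookup_lab l D = Some ((As, A, L, B), D') \<Longrightarrow>
  bwd D (DLab l Ms) = CLam (csubst (cinst (map (bwd D) Ms)) (bwd D' A))
              (csubst (cup (cinst (map (bwd D) Ms))) (bwd D' L))"
  by simp

lemma goodL_lookup: "goodL D \<Longrightarrow> lookup_lab l D = Some ((As, A, L, B), D') \<Longrightarrow>
       lok D L \<and> bwd D' L = bwd D L \<and> ccl (length As) (bwd D' A) \<and> ccl (Suc (length As)) (bwd D' L)"
  unfolding goodL_def by blast

lemma lok_ren: "lok D M \<Longrightarrow> lok D (dren r M)"
  by (induction M arbitrary: r) auto

lemma lok_subst: "lok D M \<Longrightarrow> (\<forall>i. lok D (s i)) \<Longrightarrow> lok D (dsubst s M)"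
proof (induction M arbitrary: s)
  case (DPi A B)
  have "\<forall>i. lok D (dup s i)" using DPi.prems by (auto simp: dup_def dlift_def lok_ren split: nat.split)
  with DPi show ?case by auto
qed auto

lemma lok_dinst: "\<forall>x\<in>set xs. lok D x \<Longrightarrow> lok D (dinst xs i)"
  by (auto simp: dinst_def)

lemma bwd_ren: "goodL D \<Longrightarrow> lok D M \<Longrightarrow> bwd D (dren r M) = cren r (bwd D M)"
proof (induction M arbitrary: r)
  case (DPi A B) then show ?case by simp
next
  case (DLab l Ms)
  from DLab.prems obtain As A L B D' where lk: "lookup_lab l D = Some ((As, A, L, B), D')"
    and len: "length Ms = length As" by auto
  from goodL_lookup[OF DLab.prems(1) lk] len
  have cA: "ccl (length (map (bwd D) Ms)) (bwd D' A)" and cL: "ccl (Suc (length (map (bwd D) Ms))) (bwd D' L)"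
    by auto
  have m: "map (bwd D \<circ> dren r) Ms = map (csubst (\<lambda>i. CVar (r i)) \<circ> bwd D) Ms"
    using DLab by (auto simp: cren_csubst)
  show ?case
    using clam_commute[OF cA cL, of "\<lambda>i. CVar (r i)"]
    by (simp add: lk m cren_csubst[of r "CLam _ _"] del: csubst.simps cren.simps)
qed auto

lemma bwd_dinst: "(\<lambda>i. bwd D (dinst xs i)) = cinst (map (bwd D) xs)"
  by (rule ext) (auto simp: dinst_def cinst_def rev_nth)

lemma bwd_dup: "goodL D \<Longrightarrow> \<forall>i. lok D (s i) \<Longrightarrow> (\<lambda>i. bwd D (dup s i)) = cup (\<lambda>i. bwd D (s i))"
  by (rule ext, case_tac i) (auto simp: dlift_def clift_def bwd_ren)

lemma bwd_subst: "goodL D \<Longrightarrow> lok D M \<Longrightarrow> \<forall>i. lok D (s i) \<Longrightarrow>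
   bwd D (dsubst s M) = csubst (\<lambda>i. bwd D (s i)) (bwd D M)"
proof (induction M arbitrary: s)
  case (DPi A B)
  have "\<forall>i. lok D (dup s i)" using DPi.prems by (auto simp: dup_def dlift_def lok_ren split: nat.split)
  with DPi show ?case by (simp add: bwd_dup)
next
  case (DLab l Ms)
  from DLab.prems obtain As A L B D' where lk: "lookup_lab l D = Some ((As, A, L, B), D')"
    and len: "length Ms = length As" by auto
  from goodL_lookup[OF DLab.prems(1) lk] len
  have cA: "ccl (length (map (bwd D) Ms)) (bwd D' A)" and cL: "ccl (Suc (length (map (bwd D) Ms))) (bwd D' L)"
    by auto
  have m: "map (bwd D \<circ> dsubst s) Ms = map (csubst (\<lambda>i. bwd D (s i)) \<circ> bwd D) Ms"
    using DLab by auto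
  show ?case
    using clam_commute[OF cA cL, of "\<lambda>i. bwd D (s i)"]
    by (simp add: lk m del: csubst.simps)
qed auto

lemma bwd_ccl: "goodL D \<Longrightarrow> lok D M \<Longrightarrow> dcl n M \<Longrightarrow> ccl n (bwd D M)"
proof (induction M arbitrary: n)
  case (DLab l Ms)
  from DLab.prems obtain As A L B D' where lk: "lookup_lab l D = Some ((As, A, L, B), D')"
    and len: "length Ms = length As" by auto
  from goodL_lookup[OF DLab.prems(1) lk] len
  have cA: "ccl (length Ms) (bwd D' A)" and cL: "ccl (Suc (length Ms)) (bwd D' L)"
    by auto
  have e: "\<forall>i<length Ms. ccl n (cinst (map (bwd D) Ms) i)"
    using DLab by (auto simp: cinst_def)
  have e2: "\<forall>i<Suc (length Ms). ccl (Suc n) (cup (cinst (map (bwd D) Ms)) i)"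
    using e by (auto simp: less_Suc_eq_0_disj clift_def intro!: ccl_ren)
  show ?case using ccl_subst[OF cA e] ccl_subst[OF cL e2] by (simp add: lk)
qed auto


lemma cinst1_0[simp]: "cinst [x] 0 = x" and cinst1_S[simp]: "cinst [x] (Suc j) = CVar j"
  by (simp_all add: cinst_def)

lemma cstep_ren: "cstep a b \<Longrightarrow> cstep (cren r a) (cren r b)"
proof (induction arbitrary: r rule: cstep.induct)
  case (beta A N M)
  have "cren r (csubst (cinst [M]) N) = csubst (cinst [cren r M]) (cren (upr r) N)"
    by (simp add: ren_csubst csubst_ren, rule arg_cong[where f="\<lambda>s. csubst s N"], rule ext, case_tac i, auto)
  then show ?case by (simp add: cstep.beta)
qed (auto intro: cstep.intros)

lemma csteps_ren: "csteps a b \<Longrightarrow> csteps (cren r a) (cren r b)"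
  unfolding csteps_def by (induction rule: rtranclp_induct) (auto intro: rtranclp.rtrancl_into_rtrancl cstep_ren)

lemma csteps_Pi: "csteps A A' \<Longrightarrow> csteps B B' \<Longrightarrow> csteps (CPi A B) (CPi A' B')"
proof -
  assume a: "csteps A A'" and b: "csteps B B'"
  have "csteps (CPi A B) (CPi A' B)" using a unfolding csteps_def
    by (induction rule: rtranclp_induct) (auto intro: rtranclp.rtrancl_into_rtrancl cstep.intros)
  moreover have "csteps (CPi A' B) (CPi A' B')" using b unfolding csteps_def
    by (induction rule: rtranclp_induct) (auto intro: rtranclp.rtrancl_into_rtrancl cstep.intros)
  ultimately show ?thesis unfolding csteps_def by simp
qed

lemma csteps_App: "csteps A A' \<Longrightarrow> csteps B B' \<Longrightarrow> csteps (CApp A B) (CApp A' B')"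
proof -
  assume a: "csteps A A'" and b: "csteps B B'"
  have "csteps (CApp A B) (CApp A' B)" using a unfolding csteps_def
    by (induction rule: rtranclp_induct) (auto intro: rtranclp.rtrancl_into_rtrancl cstep.intros)
  moreover have "csteps (CApp A' B) (CApp A' B')" using b unfolding csteps_def
    by (induction rule: rtranclp_induct) (auto intro: rtranclp.rtrancl_into_rtrancl cstep.intros)
  ultimately show ?thesis unfolding csteps_def by simp
qed

lemma csteps_Lam: "csteps A A' \<Longrightarrow> csteps B B' \<Longrightarrow> csteps (CLam A B) (CLam A' B')"
proof -
  assume a: "csteps A A'" and b: "csteps B B'"
  have "csteps (CLam A B) (CLam A' B)" using a unfolding csteps_def
    by (induction rule: rtranclp_induct) (auto intro: rtranclp.rtrancl_into_rtrancl cstep.intros)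
  moreover have "csteps (CLam A' B) (CLam A' B')" using b unfolding csteps_def
    by (induction rule: rtranclp_induct) (auto intro: rtranclp.rtrancl_into_rtrancl cstep.intros)
  ultimately show ?thesis unfolding csteps_def by simp
qed

lemma csteps_refl[simp]: "csteps a a" by (simp add: csteps_def)

lemma csteps_subst: "\<forall>i. csteps (s i) (s' i) \<Longrightarrow> csteps (csubst s t) (csubst s' t)"
proof (induction t arbitrary: s s')
  case (CPi A B)
  have "\<forall>i. csteps (cup s i) (cup s' i)" using CPi.prems
    by (auto simp: cup_def clift_def csteps_ren split: nat.split)
  with CPi show ?case by (auto intro: csteps_Pi)
next
  case (CLam A B)
  have "\<forall>i. csteps (cup s i) (cup s' i)" using CLam.prems
    by (auto simp: cup_def clift_def csteps_ren split: nat.split)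
  with CLam show ?case by (auto intro: csteps_Lam)
qed (auto intro: csteps_App)

lemma cinst_mid: "csteps a b \<Longrightarrow> \<forall>i. csteps (cinst (xs @ a # ys) i) (cinst (xs @ b # ys) i)"
  by (auto simp: cinst_def nth_append nth_Cons split: nat.split)

lemma lookup_dom: "lookup_lab l D = Some x \<Longrightarrow> l \<in> fst ` set D"
  by (induction l D rule: lookup_lab.induct) (auto split: if_splits)

lemma lookup_in: "distinct (map fst D) \<Longrightarrow> (l, d) \<in> set D \<Longrightarrow> \<exists>D'. lookup_lab l D = Some (d, D')"
  by (induction D) (auto, force)


lemma csteps_cup: "\<forall>i. csteps (s i) (s' i) \<Longrightarrow> \<forall>i. csteps (cup s i) (cup s' i)"
  by (auto simp: cup_def clift_def csteps_ren split: nat.split)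

lemma dstep_bwd: "dstep D M M' \<Longrightarrow> goodL D \<Longrightarrow> lok D M \<Longrightarrow> csteps (bwd D M) (bwd D M') \<and> lok D M'"
proof (induction rule: dstep.induct)
  case (lab_beta l As A L B Ms N)
  from lab_beta.prems(1) have dist: "distinct (map fst D)" by (simp add: goodL_def)
  from lookup_in[OF dist lab_beta.hyps(1)] obtain D' where lk: "lookup_lab l D = Some ((As, A, L, B), D')" by blast
  from goodL_lookup[OF lab_beta.prems(1) lk]
  have lL: "lok D L" and eL: "bwd D' L = bwd D L" and cL: "ccl (Suc (length As)) (bwd D' L)" by auto
  from lab_beta.prems(2) have lMs: "\<forall>x\<in>set (Ms @ [N]). lok D x" by auto
  have lk2: "\<forall>i. lok D (dinst (Ms @ [N]) i)" using lMs lok_dinst by blast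
  have e: "bwd D (dsubst (dinst (Ms @ [N])) L) = csubst (cinst (map (bwd D) (Ms @ [N]))) (bwd D' L)"
    using bwd_subst[OF lab_beta.prems(1) lL lk2] by (simp add: bwd_dinst eL)
  have e2: "csubst (cinst [bwd D N]) (csubst (cup (cinst (map (bwd D) Ms))) (bwd D' L))
      = csubst (cinst (map (bwd D) (Ms @ [N]))) (bwd D' L)"
    unfolding csubst_csubst
  proof (rule csubst_cong[OF cL], intro allI impI)
    fix i assume "i < Suc (length As)"
    then show "csubst (cinst [bwd D N]) (cup (cinst (map (bwd D) Ms)) i) = cinst (map (bwd D) (Ms @ [N])) i"
      using lab_beta.hyps(2)
      by (cases i) (auto simp: clift_def csubst_ren cinst_def nth_append)
  qed
  have "cstep (bwd D (DApp (DLab l Ms) N)) (bwd D (dsubst (dinst (Ms @ [N])) L))"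
    using cstep.beta e e2 lk by (simp del: csubst.simps) (metis cstep.beta)
  then show ?case using lok_subst[OF lL lk2] by (simp add: csteps_def)
next
  case (lab M M' l xs ys)
  from lab.prems(2) obtain As A L B D' where lk: "lookup_lab l D = Some ((As, A, L, B), D')"
    by auto
  from lab.prems lab.IH have ih: "csteps (bwd D M) (bwd D M')" "lok D M'" by auto
  note s = cinst_mid[OF ih(1), of "map (bwd D) xs" "map (bwd D) ys"]
  show ?case using lab.prems ih(2)
    by (simp add: lk) (auto intro!: csteps_Lam csteps_subst s csteps_cup[OF s])
qed (auto intro: csteps_Pi csteps_App)

lemma dsteps_bwd: "dsteps D M M' \<Longrightarrow> goodL D \<Longrightarrow> lok D M \<Longrightarrow> csteps (bwd D M) (bwd D M') \<and> lok D M'"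
  unfolding dsteps_def
proof (induction rule: rtranclp_induct)
  case (step y z)
  then show ?case using dstep_bwd[of D y z] unfolding csteps_def by auto
qed simp


lemma eta_aux:
  assumes g: "goodL D" and lL: "lok D L" and lM: "lok D M"
    and h1: "dsteps D L (DLab l Ns)" and h2: "dsteps D M M'"
    and h3: "(l, (As, A, N, B)) \<in> set D"
  shows "\<exists>X. csteps (bwd D L) (CLam X (bwd D (dsubst (dup (dinst Ns)) N))) \<and> csteps (bwd D M) (bwd D M')
     \<and> lok D (dsubst (dup (dinst Ns)) N) \<and> lok D (DApp (dlift M') (DVar 0))
     \<and> bwd D (DApp (dlift M') (DVar 0)) = CApp (clift (bwd D M')) (CVar 0)"
proof -
  from g have dist: "distinct (map fst D)" by (simp add: goodL_def)
  from lookup_in[OF dist h3] obtain D' where lk: "lookup_lab l D = Some ((As, A, N, B), D')" by blast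
  from goodL_lookup[OF g lk] have lN: "lok D N" and eN: "bwd D' N = bwd D N" by auto
  from dsteps_bwd[OF h1 g lL] have s1: "csteps (bwd D L) (bwd D (DLab l Ns))" and lNs: "lok D (DLab l Ns)" by auto
  from dsteps_bwd[OF h2 g lM] have s2: "csteps (bwd D M) (bwd D M')" and lM': "lok D M'" by auto
  have li: "\<forall>i. lok D (dinst Ns i)" using lNs by (auto intro: lok_dinst)
  have lu: "\<forall>i. lok D (dup (dinst Ns) i)" using li
    by (auto simp: dup_def dlift_def lok_ren split: nat.split)
  have e: "bwd D (dsubst (dup (dinst Ns)) N) = csubst (cup (cinst (map (bwd D) Ns))) (bwd D' N)"
    using bwd_subst[OF g lN lu] by (simp add: bwd_dup[OF g li] bwd_dinst eN)
  have e2: "bwd D (DApp (dlift M') (DVar 0)) = CApp (clift (bwd D M')) (CVar 0)"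
    using bwd_ren[OF g lM'] by (simp add: dlift_def clift_def)
  show ?thesis using s1 s2 e e2 lok_subst[OF lN lu] lM' lk
    by (auto simp: dlift_def lok_ren)
qed

lemma dequiv_bwd: "dequiv D M N \<Longrightarrow> goodL D \<Longrightarrow> lok D M \<Longrightarrow> lok D N \<Longrightarrow> cequiv (bwd D M) (bwd D N)"
proof (induction rule: dequiv.induct)
  case (common M L N)
  then show ?case using dsteps_bwd[of D M L] dsteps_bwd[of D N L] by (auto intro: cequiv.common)
next
  case (eta1 L l Ns M M' As A N B)
  from eta_aux[OF eta1.prems(1,2,3) eta1.hyps(1,2,3)] obtain X where
    a: "csteps (bwd D L) (CLam X (bwd D (dsubst (dup (dinst Ns)) N)))" "csteps (bwd D M) (bwd D M')"
     "lok D (dsubst (dup (dinst Ns)) N)" "lok D (DApp (dlift M') (DVar 0))"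
     "bwd D (DApp (dlift M') (DVar 0)) = CApp (clift (bwd D M')) (CVar 0)" by blast
  from eta1.IH eta1.prems(1) a(3,4) a(5)
  have "cequiv (bwd D (dsubst (dup (dinst Ns)) N)) (CApp (clift (bwd D M')) (CVar 0))" by simp
  then show ?case using a(1,2) by (rule cequiv.eta1[rotated 2])
next
  case (eta2 L l Ns M M' As A N B)
  from eta_aux[OF eta2.prems(1,3,2) eta2.hyps(1,2,3)] obtain X where
    a: "csteps (bwd D L) (CLam X (bwd D (dsubst (dup (dinst Ns)) N)))" "csteps (bwd D M) (bwd D M')"
     "lok D (dsubst (dup (dinst Ns)) N)" "lok D (DApp (dlift M') (DVar 0))"
     "bwd D (DApp (dlift M') (DVar 0)) = CApp (clift (bwd D M')) (CVar 0)" by blast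
  from eta2.IH eta2.prems(1) a(3,4) a(5)
  have "cequiv (CApp (clift (bwd D M')) (CVar 0)) (bwd D (dsubst (dup (dinst Ns)) N))" by simp
  then show ?case using a(1,2) by (rule cequiv.eta2[rotated 2])
qed

lemma typ_props:
  "wfL D \<Longrightarrow> distinct (map fst D)"
  "wfC D G \<Longrightarrow> wfL D \<and> distinct (map fst D)"
  "dtyp D G M T \<Longrightarrow> wfL D \<and> distinct (map fst D) \<and> wfC D G \<and> lok D M \<and> dcl (length G) M"
proof (induction rule: wfL_wfC_dtyp.inducts)
  case (t_lab D G l As A L B Ms)
  from lookup_in[of D l] t_lab obtain D' where "lookup_lab l D = Some ((As, A, L, B), D')" by blast
  with t_lab show ?case by (auto simp: in_set_conv_nth)
qed (auto intro: wfL_wfC_dtyp.intros)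


lemma agree: "lok D0 M \<Longrightarrow> (\<forall>l'\<in>fst ` set D0. lookup_lab l' D = lookup_lab l' D0) \<Longrightarrow>
   lok D M \<and> bwd D M = bwd D0 M"
proof (induction M)
  case (DLab l Ms)
  from DLab.prems(1) obtain d D' where lk: "lookup_lab l D0 = Some (d, D')" "length Ms = length (fst d)" by auto
  with DLab.prems(2) lookup_dom[OF lk(1)] have lk2: "lookup_lab l D = Some (d, D')" by auto
  have m: "map (bwd D) Ms = map (bwd D0) Ms" and "\<forall>M\<in>set Ms. lok D M" using DLab by auto
  with lk lk2 show ?case by (cases d) (simp only: bwd.simps option.case prod.case m, auto)
qed auto

inductive_cases wfL_consE: "wfL (x # D)"
inductive_cases wfC_consE: "wfC D (A # G)"

lemma wfL_goodL: "wfL D \<Longrightarrow> goodL D"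
proof (induction D)
  case Nil then show ?case by (simp add: goodL_def)
next
  case (Cons x D0)
  obtain l As A L B where x: "x = (l, (As, A, L, B))" by (cases x) auto
  from Cons.prems[unfolded x] obtain
    w: "wfL D0" and nl: "l \<notin> fst ` set D0" and t: "dtyp D0 (A # rev As) L B"
    by (rule wfL_consE) auto
  have g0: "goodL D0" using Cons.IH w by simp
  from typ_props(3)[OF t] have wc: "wfC D0 (A # rev As)" and lL: "lok D0 L" and cL: "dcl (Suc (length As)) L"
    by auto
  from wc obtain i where "dtyp D0 (rev As) A (DU i)" by (rule wfC_consE) auto
  from typ_props(3)[OF this] have lA: "lok D0 A" and cA: "dcl (length As) A" by auto
  let ?D = "(l, (As, A, L, B)) # D0"
  have ag: "\<forall>l'\<in>fst ` set D0. lookup_lab l' ?D = lookup_lab l' D0" using nl by auto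
  have dist: "distinct (map fst ?D)" using g0 nl by (auto simp: goodL_def)
  have "lok ?D L' \<and> bwd D' L' = bwd ?D L' \<and> ccl (length As') (bwd D' A') \<and> ccl (Suc (length As')) (bwd D' L')"
    if lk: "lookup_lab l' ?D = Some ((As', A', L', B'), D')" for l' As' A' L' B' D'
  proof (cases "l' = l")
    case True
    then have "As' = As" "A' = A" "L' = L" "D' = D0" using lk by auto
    then show ?thesis using agree[OF lL ag] bwd_ccl[OF g0 lA cA] bwd_ccl[OF g0 lL cL] by auto
  next
    case False
    then have lk0: "lookup_lab l' D0 = Some ((As', A', L', B'), D')" using lk by auto
    from goodL_lookup[OF g0 lk0] agree[of D0 L' ?D] ag show ?thesis by auto
  qed
  then show ?case using dist x unfolding goodL_def by blast
qed

theorem lemma3p21: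
  assumes "dtyp \<Delta> \<Gamma> M A" and "dtyp \<Delta> \<Gamma> N A" and "dequiv \<Delta> M N"
  shows "cequiv (bwd \<Delta> M) (bwd \<Delta> N)"
proof -
  from typ_props(3)[OF assms(1)] have "wfL \<Delta>" "lok \<Delta> M" by auto
  moreover from typ_props(3)[OF assms(2)] have "lok \<Delta> N" by auto
  ultimately show ?thesis using dequiv_bwd[OF assms(3)] wfL_goodL by blast
qed

end
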